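(* Let $n\ge3$, $k\ge0$, let $R$ be a maximal reversible set in $G_n^k$ which is not a canonical reversible set, and let $x_1,\dots,x_{k+1}$ be a consistent labeling of $A(R)$. Let $i$ be the least positive integer with $|B(x_i,R)|\neq k+2-i$. Then: (1) $2\le i\le k-n+2$; (2) $|B(x_i,R)|=k+4-i-n$; (3) for every $j\in\{i+1,\dots,k+1\}$, $|B(x_j,R)|\le k+3-i-n$.
   Context: For integers $n\ge3$, $k\ge0$, the crown $S_n^k$ is the poset with ground set $A\cup B$, $A=\{a_1,\dots,a_{n+k}\}$, $B=\{b_1,\dots,b_{n+k}\}$, indices cyclic modulo $n+k$; elements of $A$ are pairwise incomparable, as are elements of $B$, and $a_i$ is incomparable to $b_j$ when $j\in\{i,\dots,i+k\}$ (mod $n+k$), while $a_i<b_j$ otherwise. $\mathrm{Inc}(A,B)$ is the set of pairs $(a,b)\in A\times B$ with $a$ incomparable to $b$; $G_n^k$ has vertex set $\mathrm{Inc}(A,B)$, with $(a,b)$ adjacent to $(x,y)$ iff $a<y$ and $x<b$. A set $R\subseteq\mathrm{Inc}(A,B)$ is reversible if some linear extension $L$ of $S_n^k$ has $b<a$ in $L$ for all $(a,b)\in R$; maximal reversible means maximal under inclusion among reversible sets. For $R\subseteq\mathrm{Inc}(A,B)$ and $a\in A$, $B(a,R)=\{b:(a,b)\in R\}$ and $A(R)=\{a: B(a,R)\ne\emptyset\}$. For maximal reversible $R$, $|A(R)|=k+1$ and the sets $B(a,R)$ form a chain under inclusion; a consistent labeling of $A(R)$ is a labeling $A(R)=\{x_1,\dots,x_{k+1}\}$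 with $B(x_\beta,R)\subseteq B(x_\alpha,R)$ whenever $\alpha<\beta$. A subset of $A$ is contiguous if it is a block of cyclically consecutive elements; a sequence $\sigma=(x_1,\dots,x_r)$ of distinct elements of $A$ is $h$-contiguous if each $\{x_1,\dots,x_i\}$ is contiguous. $T(\sigma)$ contains every $(x_1,b)\in\mathrm{Inc}(A,B)$, and for $1\le i<r$ contains $(x_{i+1},b)$ iff $(x_{i+1},b)\in\mathrm{Inc}(A,B)$ and $(x_i,b)\in T(\sigma)$. A canonical reversible set is $T(\sigma)$ for an $h$-contiguous $\sigma$ of length $k+1$. *)

theory Defs
  imports Main
begin

text \<open>Elements of the crown S_n^k: a_i is CA i, b_j is CB j, with indices in {0..<n+k}
  (indices are taken cyclically modulo n+k).\<close>
datatype celem = CA nat | CB nat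

definition ground :: "nat \<Rightarrow> nat \<Rightarrow> celem set" where
  "ground n k = {CA i | i. i < n + k} \<union> {CB j | j. j < n + k}"

definition Aset :: "nat \<Rightarrow> nat \<Rightarrow> celem set" where
  "Aset n k = {CA i | i. i < n + k}"

definition Bset :: "nat \<Rightarrow> nat \<Rightarrow> celem set" where
  "Bset n k = {CB j | j. j < n + k}"

text \<open>a_i incomparable to b_j iff j \<in> {i,...,i+k} mod (n+k).\<close>
definition incomp_idx :: "nat \<Rightarrow> nat \<Rightarrow> nat \<Rightarrow> nat \<Rightarrow> bool" where
  "incomp_idx n k i j \<longleftrightarrow> (j + (n + k) - i) mod (n + k) \<le> k"

definition crown_less :: "nat \<Rightarrow> nat \<Rightarrow> celem \<Rightarrow> celem \<Rightarrow> bool" where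
  "crown_less n k x y \<longleftrightarrow>
     (\<exists>i j. x = CA i \<and> y = CB j \<and> i < n + k \<and> j < n + k \<and> \<not> incomp_idx n k i j)"

definition Inc :: "nat \<Rightarrow> nat \<Rightarrow> (celem \<times> celem) set" where
  "Inc n k = {(CA i, CB j) | i j. i < n + k \<and> j < n + k \<and> incomp_idx n k i j}"

definition before :: "celem list \<Rightarrow> celem \<Rightarrow> celem \<Rightarrow> bool" where
  "before L x y \<longleftrightarrow> (\<exists>p q. p < q \<and> q < length L \<and> L ! p = x \<and> L ! q = y)"

text \<open>Linear extensions, represented as lists enumerating the ground set bottom to top.\<close>
definition lin_ext :: "nat \<Rightarrow> nat \<Rightarrow> celem list \<Rightarrow> bool" where
  "lin_ext n k L \<longleftrightarrow> distinct L \<and> set L = ground n k \<and>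
     (\<forall>x y. crown_less n k x y \<longrightarrow> before L x y)"

definition reversible :: "nat \<Rightarrow> nat \<Rightarrow> (celem \<times> celem) set \<Rightarrow> bool" where
  "reversible n k R \<longleftrightarrow> R \<subseteq> Inc n k \<and>
     (\<exists>L. lin_ext n k L \<and> (\<forall>(a, b) \<in> R. before L b a))"

definition max_reversible :: "nat \<Rightarrow> nat \<Rightarrow> (celem \<times> celem) set \<Rightarrow> bool" where
  "max_reversible n k R \<longleftrightarrow> reversible n k R \<and>
     (\<forall>R'. reversible n k R' \<and> R \<subseteq> R' \<longrightarrow> R' = R)"

definition Bof :: "celem \<Rightarrow> (celem \<times> celem) set \<Rightarrow> celem set" where
  "Bof a R = {b. (a, b) \<in> R}"

definition AofR :: "(celem \<times> celem) set \<Rightarrow> celem set" where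
  "AofR R = {a. Bof a R \<noteq> {}}"

definition consistent_labeling :: "nat \<Rightarrow> (celem \<times> celem) set \<Rightarrow> (nat \<Rightarrow> celem) \<Rightarrow> bool" where
  "consistent_labeling k R x \<longleftrightarrow> bij_betw x {1..k+1} (AofR R) \<and>
     (\<forall>\<alpha> \<in> {1..k+1}. \<forall>\<beta> \<in> {1..k+1}. \<alpha> < \<beta> \<longrightarrow> Bof (x \<beta>) R \<subseteq> Bof (x \<alpha>) R)"

definition contiguous :: "nat \<Rightarrow> nat \<Rightarrow> celem set \<Rightarrow> bool" where
  "contiguous n k S \<longleftrightarrow> (\<exists>s l. s < n + k \<and> l \<le> n + k \<and>
     S = {CA ((s + t) mod (n + k)) | t. t < l})"

definition h_contiguous :: "nat \<Rightarrow> nat \<Rightarrow> celem list \<Rightarrow> bool" where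
  "h_contiguous n k \<sigma> \<longleftrightarrow> distinct \<sigma> \<and> set \<sigma> \<subseteq> Aset n k \<and>
     (\<forall>i. 1 \<le> i \<and> i \<le> length \<sigma> \<longrightarrow> contiguous n k (set (take i \<sigma>)))"

text \<open>Tlev n k \<sigma> i: the b's with (\<sigma>!i, b) \<in> T(\<sigma>) (0-indexed list).\<close>
fun Tlev :: "nat \<Rightarrow> nat \<Rightarrow> celem list \<Rightarrow> nat \<Rightarrow> celem set" where
  "Tlev n k \<sigma> 0 = {b. (\<sigma> ! 0, b) \<in> Inc n k}"
| "Tlev n k \<sigma> (Suc i) = {b. (\<sigma> ! Suc i, b) \<in> Inc n k \<and> b \<in> Tlev n k \<sigma> i}"

definition Tset :: "nat \<Rightarrow> nat \<Rightarrow> celem list \<Rightarrow> (celem \<times> celem) set" where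
  "Tset n k \<sigma> = {(\<sigma> ! i, b) | i b. i < length \<sigma> \<and> b \<in> Tlev n k \<sigma> i}"

definition canonical_reversible :: "nat \<Rightarrow> nat \<Rightarrow> (celem \<times> celem) set \<Rightarrow> bool" where
  "canonical_reversible n k R \<longleftrightarrow>
     (\<exists>\<sigma>. h_contiguous n k \<sigma> \<and> length \<sigma> = k + 1 \<and> R = Tset n k \<sigma>)"

end

theory Submission
  imports Defs
begin


definition Wn :: "nat \<Rightarrow> nat \<Rightarrow> nat set \<Rightarrow> nat set" where
  "Wn n k S = {l. l < n + k \<and> (\<forall>m\<in>S. incomp_idx n k m l)}"

definition Rr :: "nat \<Rightarrow> nat \<Rightarrow> (nat \<Rightarrow> nat) \<Rightarrow> (celem \<times> celem) set" where
  "Rr n k \<rho> = {(CA p, CB l) | p l. p < n + k \<and> l \<in> Wn n k {m. m < n + k \<and> \<rho> p \<le> \<rho> m}}"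

lemma before_sort_key:
  assumes "inj_on r (set xs)" "x \<in> set xs" "y \<in> set xs" "r x < r y"
  shows "before (sort_key r xs) x y"
proof -
  let ?L = "sort_key r xs"
  have s: "sorted (map r ?L)" by simp
  have st: "set ?L = set xs" by simp
  obtain p where p: "p < length ?L" "?L ! p = x" using assms(2) st by (metis in_set_conv_nth)
  obtain q where q: "q < length ?L" "?L ! q = y" using assms(3) st by (metis in_set_conv_nth)
  have "\<not> q \<le> p"
  proof
    assume "q \<le> p"
    hence "map r ?L ! q \<le> map r ?L ! p" using s p(1) sorted_nth_mono by (metis length_map)
    thus False using p q assms(4) by simp
  qed
  thus ?thesis unfolding before_def using p q by (metis not_le)
qed

definition gl :: "nat \<Rightarrow> celem list" where
  "gl N = map CA [0..<N] @ map CB [0..<N]"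

lemma set_gl: "set (gl (n+k)) = ground n k"
  unfolding gl_def ground_def by auto

lemma distinct_gl: "distinct (gl N)"
  unfolding gl_def by (auto simp: distinct_map inj_on_def)

definition Mx :: "nat \<Rightarrow> nat \<Rightarrow> (nat \<Rightarrow> nat) \<Rightarrow> nat \<Rightarrow> nat" where
  "Mx n k \<rho> l = Max (insert 0 {Suc (\<rho> m) | m. m < n + k \<and> \<not> incomp_idx n k m l})"

fun rr :: "nat \<Rightarrow> nat \<Rightarrow> (nat \<Rightarrow> nat) \<Rightarrow> celem \<Rightarrow> nat" where
  "rr n k \<rho> (CA m) = (n + k + 1) * Suc (\<rho> m)"
| "rr n k \<rho> (CB l) = (n + k + 1) * Mx n k \<rho> l + 1 + l"

lemma Mx_fin: "finite (insert 0 {Suc (\<rho> m) | m. m < n + k \<and> \<not> incomp_idx n k m l})"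
proof -
  have "{Suc (\<rho> m) | m. m < n + k \<and> \<not> incomp_idx n k m l} \<subseteq> (\<lambda>m. Suc (\<rho> m)) ` {..<n+k}"
    by blast
  thus ?thesis using finite_subset by blast
qed

lemma Mx_ge: "m < n + k \<Longrightarrow> \<not> incomp_idx n k m l \<Longrightarrow> Suc (\<rho> m) \<le> Mx n k \<rho> l"
  unfolding Mx_def by (rule Max_ge[OF Mx_fin]) blast

lemma Mx_le: "(\<And>m. m < n + k \<Longrightarrow> \<not> incomp_idx n k m l \<Longrightarrow> \<rho> m < c) \<Longrightarrow> Mx n k \<rho> l \<le> c"
  unfolding Mx_def by (subst Max_le_iff[OF Mx_fin]) (auto simp: Suc_le_eq)

lemma rr_mod1: "l < n + k \<Longrightarrow> rr n k \<rho> (CB l) mod (n+k+1) = Suc l"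
proof -
  assume l: "l < n + k"
  have "rr n k \<rho> (CB l) = Suc l + Mx n k \<rho> l * (n+k+1)" by simp
  hence "rr n k \<rho> (CB l) mod (n+k+1) = Suc l mod (n+k+1)" by (simp only: mod_mult_self1)
  thus ?thesis using l by simp
qed

lemma rr_mod2: "rr n k \<rho> (CA m) mod (n+k+1) = 0"
  by (simp only: rr.simps mod_mult_self1_is_0)

lemmas rr_mod = rr_mod1 rr_mod2

lemma ground_cases: "x \<in> ground n k \<Longrightarrow> (\<And>p. p < n + k \<Longrightarrow> x = CA p \<Longrightarrow> P) \<Longrightarrow> (\<And>p. p < n + k \<Longrightarrow> x = CB p \<Longrightarrow> P) \<Longrightarrow> P"
  unfolding ground_def by blast

lemma rr_inj:
  assumes "inj_on \<rho> {..<n+k}"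
  shows "inj_on (rr n k \<rho>) (ground n k)"
proof (rule inj_onI)
  fix a b assume a: "a \<in> ground n k" and b: "b \<in> ground n k" and e: "rr n k \<rho> a = rr n k \<rho> b"
  have em: "rr n k \<rho> a mod (n+k+1) = rr n k \<rho> b mod (n+k+1)" using e by (rule arg_cong)
  show "a = b"
  proof (rule ground_cases[OF a]; rule ground_cases[OF b])
    fix p q assume p: "p < n+k" "a = CA p" and q: "q < n+k" "b = CA q"
    have "(n+k+1) * Suc (\<rho> p) = (n+k+1) * Suc (\<rho> q)" using e unfolding p q rr.simps .
    hence "\<rho> p = \<rho> q" by (simp only: mult_cancel1) simp
    thus "a = b" using assms p q unfolding inj_on_def by blast
  next
    fix p q assume p: "p < n+k" "a = CA p" and q: "q < n+k" "b = CB q"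
    have "rr n k \<rho> a mod (n+k+1) = 0" unfolding p by (rule rr_mod2)
    moreover have "rr n k \<rho> b mod (n+k+1) = Suc q" unfolding q(2) by (rule rr_mod1[OF q(1)])
    ultimately show "a = b" using em by simp
  next
    fix p q assume p: "p < n+k" "a = CB p" and q: "q < n+k" "b = CA q"
    have "rr n k \<rho> b mod (n+k+1) = 0" unfolding q by (rule rr_mod2)
    moreover have "rr n k \<rho> a mod (n+k+1) = Suc p" unfolding p(2) by (rule rr_mod1[OF p(1)])
    ultimately show "a = b" using em by simp
  next
    fix p q assume p: "p < n+k" "a = CB p" and q: "q < n+k" "b = CB q"
    have "rr n k \<rho> b mod (n+k+1) = Suc q" unfolding q(2) by (rule rr_mod1[OF q(1)])
    moreover have "rr n k \<rho> a mod (n+k+1) = Suc p" unfolding p(2) by (rule rr_mod1[OF p(1)])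
    ultimately show "a = b" using em p q by simp
  qed
qed

lemma Rr_reversible:
  assumes "inj_on \<rho> {..<n+k}"
  shows "reversible n k (Rr n k \<rho>)"
proof -
  let ?L = "sort_key (rr n k \<rho>) (gl (n+k))"
  have inj: "inj_on (rr n k \<rho>) (set (gl (n+k)))" using rr_inj[OF assms] set_gl by simp
  have bef: "before ?L x y" if "x \<in> ground n k" "y \<in> ground n k" "rr n k \<rho> x < rr n k \<rho> y" for x y
    using before_sort_key[OF inj] that set_gl by simp
  have lin: "lin_ext n k ?L"
    unfolding lin_ext_def
  proof (intro conjI allI impI)
    show "distinct ?L" using distinct_gl by simp
    show "set ?L = ground n k" using set_gl by simp
    fix x y assume "crown_less n k x y"
    then obtain i j where ij: "x = CA i" "y = CB j" "i < n+k" "j < n+k" "\<not> incomp_idx n k i j"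
      unfolding crown_less_def by blast
    have "Suc (\<rho> i) \<le> Mx n k \<rho> j" using Mx_ge ij by blast
    hence "(n+k+1) * Suc (\<rho> i) \<le> (n+k+1) * Mx n k \<rho> j" by (rule mult_le_mono2)
    hence "rr n k \<rho> x < rr n k \<rho> y" using ij by simp
    moreover have "x \<in> ground n k" "y \<in> ground n k" using ij unfolding ground_def by auto
    ultimately show "before ?L x y" using bef by blast
  qed
  have sub: "Rr n k \<rho> \<subseteq> Inc n k"
    unfolding Rr_def Inc_def Wn_def by auto
  have rev: "before ?L b a" if asm: "(a, b) \<in> Rr n k \<rho>" for a b
  proof -
    obtain p l where pl: "a = CA p" "b = CB l" "p < n+k" "l < n+k"
      "\<forall>m. m < n+k \<and> \<rho> p \<le> \<rho> m \<longrightarrow> incomp_idx n k m l"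
      using asm unfolding Rr_def Wn_def by fastforce
    have "Mx n k \<rho> l \<le> \<rho> p"
      by (rule Mx_le) (use pl(5) in \<open>meson not_le\<close>)
    hence "(n+k+1) * Mx n k \<rho> l \<le> (n+k+1) * \<rho> p" by (rule mult_le_mono2)
    hence "rr n k \<rho> b < rr n k \<rho> a" using pl by simp
    moreover have "a \<in> ground n k" "b \<in> ground n k" using pl unfolding ground_def by auto
    ultimately show ?thesis using bef by blast
  qed
  show ?thesis unfolding reversible_def using lin sub rev by blast
qed

definition posn :: "'a list \<Rightarrow> 'a \<Rightarrow> nat" where
  "posn L x = (THE p. p < length L \<and> L ! p = x)"

lemma posn_nth: "distinct L \<Longrightarrow> p < length L \<Longrightarrow> posn L (L ! p) = p"
  unfolding posn_def by (rule the_equality) (auto simp: nth_eq_iff_index_eq)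

lemma posn_inj: "distinct L \<Longrightarrow> x \<in> set L \<Longrightarrow> y \<in> set L \<Longrightarrow> posn L x = posn L y \<Longrightarrow> x = y"
  by (metis in_set_conv_nth posn_nth)

lemma before_idx:
  assumes "distinct L" "before L x y" shows "posn L x < posn L y"
  using assms unfolding before_def by (auto simp: posn_nth)

lemma Rchar:
  assumes "max_reversible n k R"
  shows "\<exists>\<rho>. inj_on \<rho> {..<n+k} \<and> R = Rr n k \<rho>"
proof -
  obtain L where L: "lin_ext n k L" "R \<subseteq> Inc n k" "\<forall>(a,b)\<in>R. before L b a"
    using assms unfolding max_reversible_def reversible_def by blast
  have d: "distinct L" and sL: "set L = ground n k" using L(1) unfolding lin_ext_def by auto
  define \<rho> where "\<rho> m = posn L (CA m)" for m
  have inj: "inj_on \<rho> {..<n+k}"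
  proof (rule inj_onI)
    fix a b assume "a \<in> {..<n+k}" "b \<in> {..<n+k}" "\<rho> a = \<rho> b"
    hence "CA a \<in> set L" "CB b \<in> set L" "CA b \<in> set L" using sL unfolding ground_def by auto
    thus "a = b" using \<open>\<rho> a = \<rho> b\<close> posn_inj[OF d] unfolding \<rho>_def by blast
  qed
  have "R \<subseteq> Rr n k \<rho>"
  proof
    fix z assume z: "z \<in> R"
    then obtain p l where pl: "z = (CA p, CB l)" "p < n+k" "l < n+k" "incomp_idx n k p l"
      using L(2) unfolding Inc_def by auto
    have bl: "posn L (CB l) < posn L (CA p)" using L(3) z pl before_idx[OF d] by auto
    have "incomp_idx n k m l" if "m < n+k" "\<rho> p \<le> \<rho> m" for m
    proof (rule ccontr)
      assume "\<not> incomp_idx n k m l"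
      hence "crown_less n k (CA m) (CB l)" unfolding crown_less_def using that pl by auto
      hence "before L (CA m) (CB l)" using L(1) unfolding lin_ext_def by blast
      hence "posn L (CA m) < posn L (CB l)" using before_idx[OF d] by blast
      thus False using bl that unfolding \<rho>_def by simp
    qed
    thus "z \<in> Rr n k \<rho>" unfolding Rr_def Wn_def using pl by auto
  qed
  hence "Rr n k \<rho> = R" using assms Rr_reversible[OF inj] unfolding max_reversible_def by blast
  thus ?thesis using inj by blast
qed


definition rk :: "nat \<Rightarrow> (nat \<Rightarrow> nat) \<Rightarrow> nat \<Rightarrow> nat" where
  "rk N \<rho> m = card {m'. m' < N \<and> \<rho> m < \<rho> m'}"

definition Tn :: "nat \<Rightarrow> (nat \<Rightarrow> nat) \<Rightarrow> nat \<Rightarrow> nat set" where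
  "Tn N \<rho> a = {m. m < N \<and> rk N \<rho> m < a}"

definition qq :: "nat \<Rightarrow> (nat \<Rightarrow> nat) \<Rightarrow> nat \<Rightarrow> nat" where
  "qq N \<rho> a = inv_into {..<N} (rk N \<rho>) (a - 1)"

lemma rk_lt:
  assumes "m < N" shows "rk N \<rho> m < N"
proof -
  have "{m'. m' < N \<and> \<rho> m < \<rho> m'} \<subseteq> {..<N} - {m}" by auto
  hence "rk N \<rho> m \<le> card ({..<N} - {m})" unfolding rk_def by (intro card_mono) auto
  also have "\<dots> = N - 1" using assms by simp
  finally show ?thesis using assms by linarith
qed

lemma rk_mono:
  assumes "m < N" "m' < N" "\<rho> m < \<rho> m'" shows "rk N \<rho> m' < rk N \<rho> m"
proof -
  have "{x. x < N \<and> \<rho> m' < \<rho> x} \<subset> {x. x < N \<and> \<rho> m < \<rho> x}"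
    using assms by auto
  thus ?thesis unfolding rk_def by (intro psubset_card_mono) auto
qed

lemma rk_le_iff:
  assumes "inj_on \<rho> {..<N}" "m < N" "m' < N"
  shows "rk N \<rho> m \<le> rk N \<rho> m' \<longleftrightarrow> \<rho> m' \<le> \<rho> m"
proof
  assume "rk N \<rho> m \<le> rk N \<rho> m'"
  thus "\<rho> m' \<le> \<rho> m" using rk_mono[of m N m' \<rho>] assms by (meson leD leI)
next
  assume h: "\<rho> m' \<le> \<rho> m"
  show "rk N \<rho> m \<le> rk N \<rho> m'"
  proof (cases "\<rho> m' = \<rho> m")
    case True
    hence "m = m'" using assms unfolding inj_on_def by auto
    thus ?thesis by simp
  next
    case False
    thus ?thesis using h rk_mono[of m' N m \<rho>] assms by simp
  qed
qed

lemma rk_inj: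
  assumes "inj_on \<rho> {..<N}" shows "inj_on (rk N \<rho>) {..<N}"
  by (rule inj_onI) (use rk_le_iff[OF assms] in \<open>metis lessThan_iff order_antisym order_refl inj_onD[OF assms]\<close>)

lemma rk_bij:
  assumes "inj_on \<rho> {..<N}" shows "bij_betw (rk N \<rho>) {..<N} {..<N}"
proof -
  have "rk N \<rho> ` {..<N} \<subseteq> {..<N}" using rk_lt by auto
  moreover have "card (rk N \<rho> ` {..<N}) = N" using card_image[OF rk_inj[OF assms]] by simp
  ultimately have "rk N \<rho> ` {..<N} = {..<N}" by (intro card_subset_eq) auto
  thus ?thesis using rk_inj[OF assms] unfolding bij_betw_def by blast
qed

lemma qq_props:
  assumes "inj_on \<rho> {..<N}" "1 \<le> a" "a \<le> N"
  shows "qq N \<rho> a < N" "rk N \<rho> (qq N \<rho> a) = a - 1"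
proof -
  have "a - 1 \<in> rk N \<rho> ` {..<N}" using rk_bij[OF assms(1)] assms(2,3) unfolding bij_betw_def by auto
  have "inv_into {..<N} (rk N \<rho>) (a-1) \<in> {..<N}" by (rule inv_into_into) fact
  thus "qq N \<rho> a < N" unfolding qq_def by simp
  show "rk N \<rho> (qq N \<rho> a) = a - 1" unfolding qq_def by (rule f_inv_into_f) fact
qed

lemma qq_inj:
  assumes "inj_on \<rho> {..<N}" shows "inj_on (qq N \<rho>) {1..N}"
  by (rule inj_onI) (metis atLeastAtMost_iff qq_props(2)[OF assms] le_add_diff_inverse2 )

lemma qq_rk:
  assumes "inj_on \<rho> {..<N}" "m < N" shows "qq N \<rho> (Suc (rk N \<rho> m)) = m"
proof -
  have "rk N \<rho> m < N" using rk_lt assms by auto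
  hence "qq N \<rho> (Suc (rk N \<rho> m)) < N" "rk N \<rho> (qq N \<rho> (Suc (rk N \<rho> m))) = rk N \<rho> m"
    using qq_props[OF assms(1), of "Suc (rk N \<rho> m)"] by auto
  thus ?thesis using inj_onD[OF rk_inj[OF assms(1)]] assms(2) by blast
qed

lemma card_Tn:
  assumes "inj_on \<rho> {..<N}" "a \<le> N" shows "card (Tn N \<rho> a) = a"
proof -
  have "bij_betw (rk N \<rho>) (Tn N \<rho> a) {..<a}"
  proof -
    have "rk N \<rho> ` Tn N \<rho> a = {..<a}"
    proof
      show "rk N \<rho> ` Tn N \<rho> a \<subseteq> {..<a}" unfolding Tn_def by auto
      show "{..<a} \<subseteq> rk N \<rho> ` Tn N \<rho> a"
      proof
        fix j assume "j \<in> {..<a}"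
        hence j: "j < a" by simp
        hence "qq N \<rho> (Suc j) < N" "rk N \<rho> (qq N \<rho> (Suc j)) = j" using qq_props[OF assms(1), of "Suc j"] assms(2) by auto
        thus "j \<in> rk N \<rho> ` Tn N \<rho> a" unfolding Tn_def using j by (metis (mono_tags, lifting) imageI mem_Collect_eq)
      qed
    qed
    moreover have "inj_on (rk N \<rho>) (Tn N \<rho> a)" using rk_inj[OF assms(1)] by (rule inj_on_subset) (auto simp: Tn_def)
    ultimately show ?thesis unfolding bij_betw_def by blast
  qed
  thus ?thesis using bij_betw_same_card by fastforce
qed

lemma Suf_Tn:
  assumes "inj_on \<rho> {..<N}" "p < N"
  shows "{m. m < N \<and> \<rho> p \<le> \<rho> m} = Tn N \<rho> (Suc (rk N \<rho> p))"
  unfolding Tn_def using rk_le_iff[OF assms(1) _ assms(2)] by (auto simp: less_Suc_eq_le)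

lemma Tn_mono: "a \<le> b \<Longrightarrow> Tn N \<rho> a \<subseteq> Tn N \<rho> b"
  unfolding Tn_def by auto

lemma Tn_Suc:
  assumes "inj_on \<rho> {..<N}" "a < N"
  shows "Tn N \<rho> (Suc a) = insert (qq N \<rho> (Suc a)) (Tn N \<rho> a)" "qq N \<rho> (Suc a) \<notin> Tn N \<rho> a"
proof -
  have q: "qq N \<rho> (Suc a) < N" "rk N \<rho> (qq N \<rho> (Suc a)) = a" using qq_props[OF assms(1), of "Suc a"] assms by auto
  show "qq N \<rho> (Suc a) \<notin> Tn N \<rho> a" using q unfolding Tn_def by auto
  show "Tn N \<rho> (Suc a) = insert (qq N \<rho> (Suc a)) (Tn N \<rho> a)"
  proof
    show "Tn N \<rho> (Suc a) \<subseteq> insert (qq N \<rho> (Suc a)) (Tn N \<rho> a)"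
    proof
      fix m assume "m \<in> Tn N \<rho> (Suc a)"
      hence m: "m < N" "rk N \<rho> m \<le> a" unfolding Tn_def by auto
      show "m \<in> insert (qq N \<rho> (Suc a)) (Tn N \<rho> a)"
      proof (cases "rk N \<rho> m = a")
        case True
        hence "m = qq N \<rho> (Suc a)" using inj_onD[OF rk_inj[OF assms(1)]] q m by (metis lessThan_iff)
        thus ?thesis by simp
      next
        case False thus ?thesis using m unfolding Tn_def by auto
      qed
    qed
    show "insert (qq N \<rho> (Suc a)) (Tn N \<rho> a) \<subseteq> Tn N \<rho> (Suc a)" using q unfolding Tn_def by auto
  qed
qed

lemma Tn_one:
  assumes "inj_on \<rho> {..<N}" "0 < N"
  shows "Tn N \<rho> 1 = {qq N \<rho> 1}"
  using Tn_Suc[OF assms(1), of 0] assms(2) by (simp add: Tn_def)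

lemma Tn_img:
  assumes "inj_on \<rho> {..<N}" "a \<le> N"
  shows "Tn N \<rho> a = qq N \<rho> ` {1..a}"
  using assms(2)
proof (induction a)
  case 0 thus ?case by (simp add: Tn_def)
next
  case (Suc a)
  have "{1..Suc a} = insert (Suc a) {1..a}" by auto
  thus ?case using Suc Tn_Suc[OF assms(1), of a] by simp
qed


lemma Wn_anti: "S \<subseteq> S' \<Longrightarrow> Wn n k S' \<subseteq> Wn n k S"
  unfolding Wn_def by auto

lemma Wn_fin: "finite (Wn n k S)"
  unfolding Wn_def by auto

lemma Bof_CA:
  assumes "inj_on \<rho> {..<n+k}" "p < n+k"
  shows "Bof (CA p) (Rr n k \<rho>) = CB ` Wn n k (Tn (n+k) \<rho> (Suc (rk (n+k) \<rho> p)))"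
proof -
  have "Bof (CA p) (Rr n k \<rho>) = CB ` Wn n k {m. m < n + k \<and> \<rho> p \<le> \<rho> m}"
    unfolding Bof_def Rr_def using assms(2) by auto
  thus ?thesis using Suf_Tn[OF assms] by simp
qed

lemma Bof_nonCA:
  assumes "\<forall>p<n+k. a \<noteq> CA p" shows "Bof a (Rr n k \<rho>) = {}"
  using assms unfolding Bof_def Rr_def by auto

lemma card_CB: "card (CB ` S) = card S"
  by (rule card_image) (simp add: inj_on_def)

lemma inj_CAqq:
  assumes "inj_on \<rho> {..<N}" "Z \<subseteq> {1..N}"
  shows "inj_on (\<lambda>a. CA (qq N \<rho> a)) Z"
proof (rule inj_onI)
  fix a b assume "a \<in> Z" "b \<in> Z" "CA (qq N \<rho> a) = CA (qq N \<rho> b)"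
  hence "a \<in> {1..N}" "b \<in> {1..N}" "qq N \<rho> a = qq N \<rho> b" using assms(2) by auto
  thus "a = b" using inj_onD[OF qq_inj[OF assms(1)]] by blast
qed

lemma card_Bof_qq:
  assumes "inj_on \<rho> {..<n+k}" "1 \<le> a" "a \<le> n+k"
  shows "card (Bof (CA (qq (n+k) \<rho> a)) (Rr n k \<rho>)) = card (Wn n k (Tn (n+k) \<rho> a))"
proof -
  have q: "qq (n+k) \<rho> a < n+k" "rk (n+k) \<rho> (qq (n+k) \<rho> a) = a - 1" using qq_props[OF assms] by auto
  have "Suc (a - 1) = a" using assms(2) by simp
  thus ?thesis using Bof_CA[OF assms(1) q(1)] q(2) by (simp add: card_CB)
qed

lemma Bof_qq:
  assumes "inj_on \<rho> {..<n+k}" "1 \<le> a" "a \<le> n+k"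
  shows "Bof (CA (qq (n+k) \<rho> a)) (Rr n k \<rho>) = CB ` Wn n k (Tn (n+k) \<rho> a)"
proof -
  have q: "qq (n+k) \<rho> a < n+k" "rk (n+k) \<rho> (qq (n+k) \<rho> a) = a - 1" using qq_props[OF assms] by auto
  have "Suc (a - 1) = a" using assms(2) by simp
  thus ?thesis using Bof_CA[OF assms(1) q(1)] q(2) by simp
qed

lemma AofR_Rr:
  assumes "inj_on \<rho> {..<n+k}"
  shows "AofR (Rr n k \<rho>) = (\<lambda>a. CA (qq (n+k) \<rho> a)) ` {a \<in> {1..n+k}. Wn n k (Tn (n+k) \<rho> a) \<noteq> {}}"
proof
  show "AofR (Rr n k \<rho>) \<subseteq> (\<lambda>a. CA (qq (n+k) \<rho> a)) ` {a \<in> {1..n+k}. Wn n k (Tn (n+k) \<rho> a) \<noteq> {}}"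
  proof
    fix z assume z: "z \<in> AofR (Rr n k \<rho>)"
    hence ne: "Bof z (Rr n k \<rho>) \<noteq> {}" unfolding AofR_def by auto
    then obtain p where p: "p < n+k" "z = CA p" using Bof_nonCA by blast
    let ?a = "Suc (rk (n+k) \<rho> p)"
    have a: "?a \<in> {1..n+k}" using rk_lt p by (simp add: Suc_le_eq)
    have "Wn n k (Tn (n+k) \<rho> ?a) \<noteq> {}" using ne Bof_CA[OF assms p(1)] p by auto
    moreover have "z = CA (qq (n+k) \<rho> ?a)" using qq_rk[OF assms p(1)] p by simp
    ultimately show "z \<in> (\<lambda>a. CA (qq (n+k) \<rho> a)) ` {a \<in> {1..n+k}. Wn n k (Tn (n+k) \<rho> a) \<noteq> {}}"
      using a by blast
  qed
  show "(\<lambda>a. CA (qq (n+k) \<rho> a)) ` {a \<in> {1..n+k}. Wn n k (Tn (n+k) \<rho> a) \<noteq> {}} \<subseteq> AofR (Rr n k \<rho>)"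
  proof
    fix z assume "z \<in> (\<lambda>a. CA (qq (n+k) \<rho> a)) ` {a \<in> {1..n+k}. Wn n k (Tn (n+k) \<rho> a) \<noteq> {}}"
    then obtain a where a: "1 \<le> a" "a \<le> n+k" "Wn n k (Tn (n+k) \<rho> a) \<noteq> {}" "z = CA (qq (n+k) \<rho> a)" by auto
    show "z \<in> AofR (Rr n k \<rho>)" unfolding AofR_def using Bof_qq[OF assms a(1,2)] a by auto
  qed
qed

lemma downset_eq:
  fixes Z :: "nat set"
  assumes "Z \<subseteq> {1..N}" "\<And>a b. a \<in> Z \<Longrightarrow> 1 \<le> b \<Longrightarrow> b \<le> a \<Longrightarrow> b \<in> Z"
  shows "Z = {1..card Z}"
proof -
  have fin: "finite Z" using assms(1) finite_subset by blast
  have sub: "Z \<subseteq> {1..card Z}"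
  proof
    fix a assume a: "a \<in> Z"
    have "{1..a} \<subseteq> Z" using assms(2)[OF a] by auto
    hence "card {1..a} \<le> card Z" by (rule card_mono[OF fin])
    hence "a \<le> card Z" by simp
    moreover have "1 \<le> a" using a assms(1) by auto
    ultimately show "a \<in> {1..card Z}" by simp
  qed
  have "card {1..card Z} = card Z" by simp
  thus ?thesis using card_subset_eq[OF finite_atLeastAtMost sub] by simp
qed

lemma nonempty_range:
  assumes "inj_on \<rho> {..<n+k}" "card (AofR (Rr n k \<rho>)) = k + 1"
  shows "{a \<in> {1..n+k}. Wn n k (Tn (n+k) \<rho> a) \<noteq> {}} = {1..k+1}"
proof -
  let ?Z = "{a \<in> {1..n+k}. Wn n k (Tn (n+k) \<rho> a) \<noteq> {}}"
  have inj: "inj_on (\<lambda>a. CA (qq (n+k) \<rho> a)) ?Z"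
    by (rule inj_CAqq[OF assms(1)]) blast
  have "card ?Z = k + 1" using assms(2) AofR_Rr[OF assms(1)] card_image[OF inj] by simp
  moreover have "?Z = {1..card ?Z}"
  proof (rule downset_eq)
    show "?Z \<subseteq> {1..n+k}" by auto
    fix a b assume ab: "a \<in> ?Z" "1 \<le> b" "b \<le> a"
    have "Tn (n+k) \<rho> b \<subseteq> Tn (n+k) \<rho> a" by (rule Tn_mono) (rule ab(3))
    hence "Wn n k (Tn (n+k) \<rho> a) \<subseteq> Wn n k (Tn (n+k) \<rho> b)" by (rule Wn_anti)
    thus "b \<in> ?Z" using ab by auto
  qed
  ultimately show ?thesis by simp
qed

lemma pigeon_max:
  fixes S :: "nat set"
  assumes "S \<subseteq> {1..K}" "card S = a" "a \<ge> 1"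
  shows "\<exists>b\<in>S. a \<le> b"
proof (rule ccontr)
  assume "\<not> ?thesis"
  hence "S \<subseteq> {1..<a}" using assms(1) by (auto simp: not_le)
  hence "card S \<le> card {1..<a}" by (rule card_mono[OF finite_atLeastLessThan])
  thus False using assms by simp
qed

lemma antitone_card_eq_aux:
  fixes K a :: nat
  assumes u: "bij_betw u {1..K} S" and v: "bij_betw v {1..K} S"
    and fu: "\<And>a b. 1 \<le> a \<Longrightarrow> a \<le> b \<Longrightarrow> b \<le> K \<Longrightarrow> F (u b) \<le> (F (u a) :: nat)"
    and fv: "\<And>a b. 1 \<le> a \<Longrightarrow> a \<le> b \<Longrightarrow> b \<le> K \<Longrightarrow> F (v b) \<le> (F (v a) :: nat)"
    and a: "1 \<le> a" "a \<le> K"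
  shows "F (v a) \<le> F (u a)"
proof -
  let ?S = "inv_into {1..K} u ` v ` {1..a}"
  have vi: "inj_on v {1..K}" using v bij_betw_def by blast
  have ui: "bij_betw (inv_into {1..K} u) S {1..K}" using u by (rule bij_betw_inv_into)
  have sa: "{1..a} \<subseteq> {1..K}" using a by auto
  have vs: "v ` {1..a} \<subseteq> S" using image_mono[OF sa, of v] v unfolding bij_betw_def by blast
  have "inj_on v {1..a}" using inj_on_subset[OF vi sa] .
  hence c1: "card (v ` {1..a}) = a" using card_image by fastforce
  have "inj_on (inv_into {1..K} u) S" using ui unfolding bij_betw_def by blast
  hence "inj_on (inv_into {1..K} u) (v ` {1..a})" using vs inj_on_subset by blast
  hence cS: "card ?S = a" using card_image c1 by metis
  have sS: "?S \<subseteq> {1..K}" using ui vs unfolding bij_betw_def by auto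
  obtain b where b: "b \<in> ?S" "a \<le> b" using pigeon_max[OF sS cS a(1)] by blast
  then obtain c where c: "c \<in> {1..a}" "b = inv_into {1..K} u (v c)" by blast
  have "v c \<in> S" using c vs by auto
  hence ub: "u b = v c" using c u by (simp add: bij_betw_inv_into_right)
  have "b \<in> {1..K}" using b(1) sS by blast
  hence "b \<le> K" by simp
  hence "F (u b) \<le> F (u a)" using fu a b by simp
  moreover have "F (v a) \<le> F (v c)" using fv c a by auto
  ultimately show ?thesis using ub by simp
qed

lemma antitone_card_eq:
  fixes K a :: nat
  assumes u: "bij_betw u {1..K} S" and v: "bij_betw v {1..K} S"
    and fu: "\<And>a b. 1 \<le> a \<Longrightarrow> a \<le> b \<Longrightarrow> b \<le> K \<Longrightarrow> F (u b) \<le> (F (u a) :: nat)"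
    and fv: "\<And>a b. 1 \<le> a \<Longrightarrow> a \<le> b \<Longrightarrow> b \<le> K \<Longrightarrow> F (v b) \<le> (F (v a) :: nat)"
    and a: "1 \<le> a" "a \<le> K"
  shows "F (u a) = F (v a)"
  using antitone_card_eq_aux[OF u v fu fv a] antitone_card_eq_aux[OF v u fv fu a] by simp

lemma labeling_cards:
  assumes inj: "inj_on \<rho> {..<n+k}" and cl: "consistent_labeling k (Rr n k \<rho>) x"
    and n: "n \<ge> 1"
  shows "\<And>a. 1 \<le> a \<Longrightarrow> a \<le> k+1 \<Longrightarrow> card (Bof (x a) (Rr n k \<rho>)) = card (Wn n k (Tn (n+k) \<rho> a))"
    and "{a \<in> {1..n+k}. Wn n k (Tn (n+k) \<rho> a) \<noteq> {}} = {1..k+1}"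
proof -
  let ?R = "Rr n k \<rho>"
  have bx: "bij_betw x {1..k+1} (AofR ?R)" using cl unfolding consistent_labeling_def by blast
  have cA: "card (AofR ?R) = k+1" using bij_betw_same_card[OF bx] by simp
  show Z: "{a \<in> {1..n+k}. Wn n k (Tn (n+k) \<rho> a) \<noteq> {}} = {1..k+1}" using nonempty_range[OF inj cA] .
  let ?q = "\<lambda>a. CA (qq (n+k) \<rho> a)"
  have bq: "bij_betw ?q {1..k+1} (AofR ?R)"
  proof -
    have "inj_on ?q {1..k+1}" by (rule inj_CAqq[OF inj]) (use n in auto)
    thus ?thesis unfolding bij_betw_def using AofR_Rr[OF inj] Z by simp
  qed
  let ?F = "\<lambda>z. card (Bof z ?R)"
  have fx: "?F (x b) \<le> ?F (x a)" if "1 \<le> a" "a \<le> b" "b \<le> k+1" for a b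
  proof (cases "a = b")
    case True thus ?thesis by simp
  next
    case False
    hence ab: "a < b" using that by simp
    have "a \<in> {1..k+1}" "b \<in> {1..k+1}" using that by auto
    hence "Bof (x b) ?R \<subseteq> Bof (x a) ?R" using cl ab unfolding consistent_labeling_def by blast
    moreover have "finite (Bof (x a) ?R)"
    proof -
      have "x a \<in> AofR ?R" using bx that unfolding bij_betw_def by auto
      then obtain p where p: "p < n+k" "x a = CA p" using Bof_nonCA unfolding AofR_def by blast
      thus ?thesis using Bof_CA[OF inj p(1)] Wn_fin by simp
    qed
    ultimately show ?thesis by (rule card_mono[rotated])
  qed
  have fq: "?F (?q b) \<le> ?F (?q a)" if "1 \<le> a" "a \<le> b" "b \<le> k+1" for a b
  proof -
    have b: "b \<le> n+k" using that n by simp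
    have a: "1 \<le> b" "a \<le> n+k" using that b by auto
    have e1: "?F (?q b) = card (Wn n k (Tn (n+k) \<rho> b))" by (rule card_Bof_qq[OF inj a(1) b])
    have e2: "?F (?q a) = card (Wn n k (Tn (n+k) \<rho> a))" by (rule card_Bof_qq[OF inj that(1) a(2)])
    have "Tn (n+k) \<rho> a \<subseteq> Tn (n+k) \<rho> b" by (rule Tn_mono) (rule that(2))
    hence "Wn n k (Tn (n+k) \<rho> b) \<subseteq> Wn n k (Tn (n+k) \<rho> a)" by (rule Wn_anti)
    hence "card (Wn n k (Tn (n+k) \<rho> b)) \<le> card (Wn n k (Tn (n+k) \<rho> a))" by (rule card_mono[OF Wn_fin])
    thus ?thesis using e1 e2 by simp
  qed
  fix a assume a: "1 \<le> a" "a \<le> k+1"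
  have "?F (x a) = ?F (?q a)" by (rule antitone_card_eq[where F="\<lambda>z. card (Bof z (Rr n k \<rho>))", OF bx bq fx fq a])
  moreover have "a \<le> n+k" using a n by simp
  ultimately show "card (Bof (x a) ?R) = card (Wn n k (Tn (n+k) \<rho> a))" using card_Bof_qq[OF inj a(1)] by simp
qed


definition sh :: "nat \<Rightarrow> nat \<Rightarrow> nat \<Rightarrow> nat" where
  "sh N s e = (s + e) mod N"

definition Pw :: "nat \<Rightarrow> nat \<Rightarrow> nat \<Rightarrow> nat \<Rightarrow> bool" where
  "Pw n k e f \<longleftrightarrow> (e \<le> f \<and> f \<le> e + k) \<or> (f < e \<and> f + n \<le> e)"

definition W' :: "nat \<Rightarrow> nat \<Rightarrow> nat set \<Rightarrow> nat set" where
  "W' n k E = {f. f < n + k \<and> (\<forall>e\<in>E. Pw n k e f)}"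

lemma modA1: "a < N \<Longrightarrow> int ((b + N - a) mod N) = (int b - int a) mod int (N::nat)"
proof -
  assume a: "a < N"
  have "int ((b + N - a) mod N) = int (b + N - a) mod int N" by (simp add: zmod_int)
  also have "int (b + N - a) = (int b - int a) + int N" using a by simp
  also have "((int b - int a) + int N) mod int N = (int b - int a) mod int N" by simp
  finally show ?thesis .
qed

lemma modA2: "e < N \<Longrightarrow> f < N \<Longrightarrow> ((s+f) mod N + N - (s+e) mod N) mod N = (f + N - e) mod (N::nat)"
proof -
  assume e: "e < N" and f: "f < N"
  have N: "0 < N" using e by simp
  have "int (((s+f) mod N + N - (s+e) mod N) mod N) = (int ((s+f) mod N) - int ((s+e) mod N)) mod int N"
    using modA1 N by simp
  also have "\<dots> = (int (s+f) mod int N - int (s+e) mod int N) mod int N" by (simp add: zmod_int)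
  also have "\<dots> = (int (s+f) - int (s+e)) mod int N" by (rule mod_diff_eq)
  also have "\<dots> = (int f - int e) mod int N" by simp
  also have "\<dots> = int ((f + N - e) mod N)" using modA1 e by simp
  finally show ?thesis by simp
qed

lemma inc_sh:
  assumes "e < n + k" "f < n + k"
  shows "incomp_idx n k (sh (n+k) s e) (sh (n+k) s f) \<longleftrightarrow> Pw n k e f"
proof -
  have "incomp_idx n k (sh (n+k) s e) (sh (n+k) s f) \<longleftrightarrow> (f + (n+k) - e) mod (n+k) \<le> k"
    unfolding incomp_idx_def sh_def using modA2[OF assms] by simp
  also have "\<dots> \<longleftrightarrow> Pw n k e f"
  proof (cases "e \<le> f")
    case True
    have "f + (n+k) - e = (f - e) + (n+k)" using True by simp
    hence "(f + (n+k) - e) mod (n+k) = (f - e) mod (n+k)" by (simp only: mod_add_self2)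
    also have "\<dots> = f - e" using assms by simp
    finally have "(f + (n+k) - e) mod (n+k) = f - e" .
    thus ?thesis using True unfolding Pw_def by arith
  next
    case False
    have "f + (n+k) - e < n + k" using False assms by linarith
    hence "(f + (n+k) - e) mod (n+k) = f + (n+k) - e" by (rule mod_less)
    thus ?thesis using False unfolding Pw_def by arith
  qed
  finally show ?thesis .
qed

lemma sh_lt: "0 < N \<Longrightarrow> sh N s e < N"
  unfolding sh_def by simp

lemma sh_inj: "inj_on (sh N s) {..<N}"
proof (rule inj_onI)
  fix a b assume ab: "a \<in> {..<N}" "b \<in> {..<N}" "sh N s a = sh N s b"
  hence e: "(s + a) mod N = (s + b) mod N" unfolding sh_def by simp
  show "a = b"
  proof (rule ccontr)
    assume "a \<noteq> b"
    then consider "a < b" | "b < a" by linarith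
    thus False
    proof cases
      case 1
      hence "N dvd (s + b) - (s + a)" using e mod_eq_dvd_iff_nat[of "s+a" "s+b" N] by simp
      hence "N dvd b - a" by simp
      moreover have "0 < b - a" "b - a < N" using 1 ab by auto
      ultimately show False using nat_dvd_not_less by blast
    next
      case 2
      hence "N dvd (s + a) - (s + b)" using e mod_eq_dvd_iff_nat[of "s+b" "s+a" N] by simp
      hence "N dvd a - b" by simp
      moreover have "0 < a - b" "a - b < N" using 2 ab by auto
      ultimately show False using nat_dvd_not_less by blast
    qed
  qed
qed

lemma sh_image: "0 < N \<Longrightarrow> sh N s ` {..<N} = {..<N}"
proof -
  assume N: "0 < N"
  have "sh N s ` {..<N} \<subseteq> {..<N}" using sh_lt[OF N] by auto
  moreover have "card (sh N s ` {..<N}) = card {..<N}" using card_image[OF sh_inj] by simp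
  ultimately show ?thesis by (intro card_subset_eq) auto
qed

lemma sh_surj:
  assumes "0 < N" "l < N" obtains f where "f < N" "sh N s f = l"
  using sh_image[OF assms(1), of s] assms(2) by (metis imageE lessThan_iff)

lemma Wn_sh:
  assumes "E \<subseteq> {..<n+k}" "0 < n + k"
  shows "Wn n k (sh (n+k) s ` E) = sh (n+k) s ` W' n k E"
proof
  show "Wn n k (sh (n+k) s ` E) \<subseteq> sh (n+k) s ` W' n k E"
  proof
    fix l assume l: "l \<in> Wn n k (sh (n+k) s ` E)"
    hence l1: "l < n+k" "\<forall>m\<in>sh (n+k) s ` E. incomp_idx n k m l" unfolding Wn_def by auto
    obtain f where f: "f < n+k" "sh (n+k) s f = l" using sh_surj[OF assms(2) l1(1)] by blast
    have "Pw n k e f" if "e \<in> E" for e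
    proof -
      have "e < n+k" using that assms(1) by auto
      moreover have "incomp_idx n k (sh (n+k) s e) (sh (n+k) s f)" using l1(2) that f(2) by blast
      ultimately show ?thesis using inc_sh f(1) by blast
    qed
    hence "f \<in> W' n k E" unfolding W'_def using f by blast
    thus "l \<in> sh (n+k) s ` W' n k E" using f by blast
  qed
  show "sh (n+k) s ` W' n k E \<subseteq> Wn n k (sh (n+k) s ` E)"
  proof
    fix l assume "l \<in> sh (n+k) s ` W' n k E"
    then obtain f where f: "f \<in> W' n k E" "l = sh (n+k) s f" by blast
    have f1: "f < n+k" "\<forall>e\<in>E. Pw n k e f" using f(1) unfolding W'_def by auto
    have "incomp_idx n k m l" if mm: "m \<in> sh (n+k) s ` E" for m
    proof -
      obtain e where e: "e \<in> E" "m = sh (n+k) s e" using mm by blast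
      have "e < n+k" using e assms(1) by auto
      thus ?thesis using inc_sh[OF _ f1(1)] f1(2) e f(2) by blast
    qed
    moreover have "l < n+k" using f(2) sh_lt[OF assms(2)] by simp
    ultimately show "l \<in> Wn n k (sh (n+k) s ` E)" unfolding Wn_def by blast
  qed
qed

lemma W'_sub: "W' n k E \<subseteq> {..<n+k}"
  unfolding W'_def by auto

lemma card_Wn_sh:
  assumes "E \<subseteq> {..<n+k}" "0 < n + k"
  shows "card (Wn n k (sh (n+k) s ` E)) = card (W' n k E)"
proof -
  have "inj_on (sh (n+k) s) (W' n k E)" using sh_inj W'_sub by (rule inj_on_subset)
  thus ?thesis using Wn_sh[OF assms] card_image by metis
qed

lemma W'_int:
  assumes "1 \<le> m" "m \<le> n + k" "n \<ge> 2"
  shows "W' n k {..<m} = {m-1..k}"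
proof
  show "W' n k {..<m} \<subseteq> {m-1..k}"
  proof
    fix f assume "f \<in> W' n k {..<m}"
    hence f: "f < n+k" "\<And>e. e < m \<Longrightarrow> Pw n k e f" unfolding W'_def by auto
    have "Pw n k 0 f" using f(2) assms(1) by simp
    hence "f \<le> k" unfolding Pw_def by simp
    moreover have "m - 1 \<le> f"
    proof (rule ccontr)
      assume "\<not> m - 1 \<le> f"
      hence "Suc f < m" by simp
      hence "Pw n k (Suc f) f" using f(2) by blast
      thus False using assms(3) unfolding Pw_def by simp
    qed
    ultimately show "f \<in> {m-1..k}" by simp
  qed
  show "{m-1..k} \<subseteq> W' n k {..<m}"
  proof
    fix f assume "f \<in> {m-1..k}"
    hence f: "m - 1 \<le> f" "f \<le> k" by auto
    have "Pw n k e f" if em: "e < m" for e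
    proof -
      have "e \<le> f" using em f by linarith
      moreover have "f \<le> e + k" using f by linarith
      ultimately show ?thesis unfolding Pw_def by blast
    qed
    moreover have "f < n + k" using f assms(3) by simp
    ultimately show "f \<in> W' n k {..<m}" unfolding W'_def by simp
  qed
qed

lemma W'_insert: "W' n k (insert e E) = W' n k E \<inter> {f. Pw n k e f}"
  unfolding W'_def by auto

lemma W'_int_pt:
  assumes "1 \<le> m" "m \<le> e" "e < n + k" "n \<ge> 2"
  shows "W' n k (insert e {..<m}) = {f. m - 1 \<le> f \<and> f \<le> k \<and> (e \<le> f \<or> f + n \<le> e)}"
proof -
  have "W' n k (insert e {..<m}) = {m-1..k} \<inter> {f. Pw n k e f}"
    using W'_insert W'_int assms by simp
  also have "\<dots> = {f. m - 1 \<le> f \<and> f \<le> k \<and> (e \<le> f \<or> f + n \<le> e)}"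
    unfolding Pw_def by auto
  finally show ?thesis .
qed

lemma card_W'_int:
  assumes "1 \<le> m" "m \<le> k + 1" "n \<ge> 2"
  shows "card (W' n k {..<m}) = k + 2 - m"
  using W'_int[OF assms(1) _ assms(3)] assms by simp

lemma contig_left:
  assumes "0 < N"
  shows "sh N s ` insert (N - 1) {..<m} = sh N (sh N s (N - 1)) ` {..<Suc m}"
proof -
  have z: "sh N (sh N s (N - 1)) 0 = sh N s (N - 1)" unfolding sh_def by simp
  have sc: "sh N (sh N s (N - 1)) (Suc t) = sh N s t" for t
  proof -
    have "sh N (sh N s (N - 1)) (Suc t) = ((s + (N - 1)) mod N + Suc t) mod N" unfolding sh_def ..
    also have "\<dots> = (s + (N - 1) + Suc t) mod N" by (rule mod_add_left_eq)
    finally have "sh N (sh N s (N - 1)) (Suc t) = (s + (N - 1) + Suc t) mod N" .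
    also have "s + (N - 1) + Suc t = (s + t) + N" using assms by simp
    finally show ?thesis unfolding sh_def by simp
  qed
  have "{..<Suc m} = insert 0 (Suc ` {..<m})" by (auto simp: lessThan_Suc_eq_insert_0)
  hence "sh N (sh N s (N - 1)) ` {..<Suc m} = insert (sh N s (N - 1)) (sh N s ` {..<m})"
    using z sc by (simp add: image_image)
  thus ?thesis by simp
qed

lemma contig_right: "sh N s ` insert m {..<m} = sh N s ` {..<Suc m}"
  by (simp add: lessThan_Suc)


lemma Rr_mem: "(CA p, CB l) \<in> Rr n k \<rho> \<longleftrightarrow> p < n + k \<and> l \<in> Wn n k {m. m < n + k \<and> \<rho> p \<le> \<rho> m}"
  unfolding Rr_def by blast

lemma move:
  assumes mr: "max_reversible n k (Rr n k \<rho>)" and inj: "inj_on \<rho> {..<n+k}"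
    and x0: "x0 < n + k" and y: "y < n + k" and yx: "\<rho> y < \<rho> x0"
    and incl: "\<forall>l \<in> Wn n k (insert x0 {m. m < n + k \<and> \<rho> x0 < \<rho> m}). incomp_idx n k y l"
    and cardlt: "card (Wn n k (insert x0 {m. m < n + k \<and> \<rho> x0 < \<rho> m}))
                  < card (Wn n k (insert y {m. m < n + k \<and> \<rho> x0 < \<rho> m}))"
  shows False
proof -
  define D where "D = {m. m < n + k \<and> \<rho> x0 < \<rho> m}"
  define \<rho>' where "\<rho>' m = (if m = y then 2 * \<rho> x0 + 1 else 2 * \<rho> m)" for m
  define Suf where "Suf f p = {m. m < n + k \<and> f p \<le> (f m :: nat)}" for f p
  have inj': "inj_on \<rho>' {..<n+k}"
  proof (rule inj_onI)
    fix a b assume ab: "a \<in> {..<n+k}" "b \<in> {..<n+k}" "\<rho>' a = \<rho>' b"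
    show "a = b"
    proof (cases "a = y"; cases "b = y")
      assume "a \<noteq> y" "b \<noteq> y"
      hence "\<rho> a = \<rho> b" using ab(3) unfolding \<rho>'_def by simp
      thus "a = b" using inj ab(1,2) unfolding inj_on_def by blast
    next
      assume "a = y" "b \<noteq> y"
      hence "2 * \<rho> x0 + 1 = 2 * \<rho> b" using ab(3) unfolding \<rho>'_def by simp
      hence False by presburger
      thus "a = b" ..
    next
      assume "a \<noteq> y" "b = y"
      hence "2 * \<rho> x0 + 1 = 2 * \<rho> a" using ab(3) unfolding \<rho>'_def by simp
      hence False by presburger
      thus "a = b" ..
    qed simp
  qed
  have claim1: "m \<in> Suf \<rho> p \<or> m = y" if "m \<in> Suf \<rho>' p" for m p
  proof (cases "m = y")
    case True thus ?thesis by simp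
  next
    case False
    have m: "m < n + k" "\<rho>' p \<le> \<rho>' m" using that unfolding Suf_def by auto
    hence m2: "\<rho>' p \<le> 2 * \<rho> m" using False unfolding \<rho>'_def by simp
    show ?thesis
    proof (cases "p = y")
      case True
      hence "2 * \<rho> x0 + 1 \<le> 2 * \<rho> m" using m2 unfolding \<rho>'_def by simp
      hence "\<rho> y \<le> \<rho> m" using yx by linarith
      thus ?thesis using m True unfolding Suf_def by simp
    next
      case pF: False
      hence "\<rho> p \<le> \<rho> m" using m2 unfolding \<rho>'_def by simp
      thus ?thesis using m unfolding Suf_def by simp
    qed
  qed
  have claim2: "insert x0 D \<subseteq> Suf \<rho> p" if "y \<in> Suf \<rho>' p" "p \<noteq> y" for p
  proof -
    have "2 * \<rho> p \<le> 2 * \<rho> x0 + 1" using that unfolding Suf_def \<rho>'_def by simp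
    hence px: "\<rho> p \<le> \<rho> x0" by linarith
    show ?thesis unfolding D_def Suf_def using px x0 by auto
  qed
  have sufy: "Suf \<rho>' y = insert y D"
  proof
    show "Suf \<rho>' y \<subseteq> insert y D"
    proof
      fix m assume m: "m \<in> Suf \<rho>' y"
      show "m \<in> insert y D"
      proof (cases "m = y")
        case False
        hence "2 * \<rho> x0 + 1 \<le> 2 * \<rho> m" "m < n + k" using m unfolding Suf_def \<rho>'_def by auto
        thus ?thesis unfolding D_def by simp
      qed simp
    qed
    show "insert y D \<subseteq> Suf \<rho>' y"
    proof
      fix m assume m: "m \<in> insert y D"
      show "m \<in> Suf \<rho>' y"
      proof (cases "m = y")
        case True thus ?thesis using y unfolding Suf_def by simp
      next
        case False
        hence "\<rho> x0 < \<rho> m" "m < n + k" using m unfolding D_def by auto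
        thus ?thesis using False unfolding Suf_def \<rho>'_def by simp
      qed
    qed
  qed
  have sub: "Rr n k \<rho> \<subseteq> Rr n k \<rho>'"
  proof
    fix z assume z: "z \<in> Rr n k \<rho>"
    then obtain p l where pl: "z = (CA p, CB l)" "p < n + k" "l \<in> Wn n k (Suf \<rho> p)"
      unfolding Rr_def Suf_def by blast
    have l: "l < n + k" "\<forall>m\<in>Suf \<rho> p. incomp_idx n k m l" using pl(3) unfolding Wn_def by auto
    have "incomp_idx n k m l" if m: "m \<in> Suf \<rho>' p" for m
    proof (cases "m \<in> Suf \<rho> p")
      case True thus ?thesis using l by blast
    next
      case False
      hence my: "m = y" using claim1[OF m] by blast
      have "y \<in> Suf \<rho> y" using y unfolding Suf_def by simp
      hence "p \<noteq> y" using False my by blast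
      hence "insert x0 D \<subseteq> Suf \<rho> p" using claim2 m my by blast
      hence "Wn n k (Suf \<rho> p) \<subseteq> Wn n k (insert x0 D)" by (rule Wn_anti)
      hence "l \<in> Wn n k (insert x0 D)" using pl(3) by blast
      thus ?thesis using incl my unfolding D_def by blast
    qed
    hence "l \<in> Wn n k (Suf \<rho>' p)" using l(1) unfolding Wn_def by blast
    thus "z \<in> Rr n k \<rho>'" using pl(1,2) unfolding Rr_def Suf_def by blast
  qed
  have "insert x0 D \<subseteq> Suf \<rho> y" unfolding D_def Suf_def using yx x0 by auto
  hence "Wn n k (Suf \<rho> y) \<subseteq> Wn n k (insert x0 D)" by (rule Wn_anti)
  hence "card (Wn n k (Suf \<rho> y)) \<le> card (Wn n k (insert x0 D))" by (rule card_mono[OF Wn_fin])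
  hence "card (Wn n k (Suf \<rho> y)) < card (Wn n k (insert y D))" using cardlt unfolding D_def by linarith
  hence "\<not> Wn n k (insert y D) \<subseteq> Wn n k (Suf \<rho> y)" using card_mono[OF Wn_fin] by (meson leD)
  then obtain l where l: "l \<in> Wn n k (insert y D)" "l \<notin> Wn n k (Suf \<rho> y)" by blast
  have "(CA y, CB l) \<in> Rr n k \<rho>'" using l(1) sufy y unfolding Rr_mem Suf_def by simp
  moreover have "(CA y, CB l) \<notin> Rr n k \<rho>" using l(2) unfolding Rr_mem Suf_def by simp
  moreover have "Rr n k \<rho>' = Rr n k \<rho>"
    using mr Rr_reversible[OF inj'] sub unfolding max_reversible_def by blast
  ultimately show False by simp
qed


declare upt_Suc[simp del]

lemma sh_zero: "s < N \<Longrightarrow> sh N s 0 = s"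
  unfolding sh_def by simp

lemma contig_step:
  assumes n: "n \<ge> 3" and m: "1 \<le> m" "m \<le> k" and s: "s < n + k"
    and x0: "x0 < n + k" "x0 \<notin> sh (n+k) s ` {..<m}"
    and c: "card (Wn n k (insert x0 (sh (n+k) s ` {..<m}))) = k + 1 - m"
  shows "\<exists>s'<n+k. insert x0 (sh (n+k) s ` {..<m}) = sh (n+k) s' ` {..<Suc m}"
proof -
  let ?N = "n + k"
  have N: "0 < ?N" using n by simp
  obtain e0 where e0: "e0 < ?N" "sh ?N s e0 = x0" using sh_surj[OF N x0(1)] by blast
  have me: "m \<le> e0"
  proof (rule ccontr)
    assume "\<not> m \<le> e0"
    hence "x0 \<in> sh ?N s ` {..<m}" using e0 by auto
    thus False using x0(2) by blast
  qed
  have T: "insert x0 (sh ?N s ` {..<m}) = sh ?N s ` insert e0 {..<m}" using e0 by simp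
  show ?thesis
  proof (cases "e0 = m \<or> e0 = ?N - 1")
    case True
    thus ?thesis
    proof
      assume "e0 = m"
      thus ?thesis using T contig_right s by metis
    next
      assume "e0 = ?N - 1"
      hence "insert x0 (sh ?N s ` {..<m}) = sh ?N (sh ?N s (?N - 1)) ` {..<Suc m}"
        using T contig_left[OF N] by simp
      moreover have "sh ?N s (?N - 1) < ?N" using sh_lt[OF N] .
      ultimately show ?thesis by blast
    qed
  next
    case False
    hence e1: "m + 1 \<le> e0" "e0 \<le> ?N - 2" using me e0(1) by auto
    have Esub: "insert e0 {..<m} \<subseteq> {..<?N}" using e0(1) m by auto
    have "card (Wn n k (insert x0 (sh ?N s ` {..<m}))) = card (W' n k (insert e0 {..<m}))"
      using T card_Wn_sh[OF Esub N] by simp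
    also have "W' n k (insert e0 {..<m}) = {f. m - 1 \<le> f \<and> f \<le> k \<and> (e0 \<le> f \<or> f + n \<le> e0)}"
      by (rule W'_int_pt) (use m me e0 n in auto)
    finally have c2: "card {f. m - 1 \<le> f \<and> f \<le> k \<and> (e0 \<le> f \<or> f + n \<le> e0)} = k + 1 - m"
      using c by simp
    obtain f1 f2 where f12: "f1 \<noteq> f2" "f1 \<in> {m-1..k}" "f2 \<in> {m-1..k}"
      "\<not> (e0 \<le> f1 \<or> f1 + n \<le> e0)" "\<not> (e0 \<le> f2 \<or> f2 + n \<le> e0)"
    proof (cases "e0 \<le> k + 1")
      case True
      show ?thesis by (rule that[of "e0 - 1" "e0 - 2"]) (use True e1 n m in auto)
    next
      case False
      show ?thesis by (rule that[of "k" "k - 1"]) (use False e1 n m in auto)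
    qed
    have "{f. m - 1 \<le> f \<and> f \<le> k \<and> (e0 \<le> f \<or> f + n \<le> e0)} \<subseteq> {m-1..k} - {f1, f2}"
      using f12 by auto
    hence "card {f. m - 1 \<le> f \<and> f \<le> k \<and> (e0 \<le> f \<or> f + n \<le> e0)} \<le> card ({m-1..k} - {f1, f2})"
      by (rule card_mono[rotated]) simp
    also have "\<dots> = card {m-1..k} - 2" using f12 by (subst card_Diff_subset) auto
    finally show ?thesis using c2 m by simp
  qed
qed

lemma Tn_Suc_sh:
  assumes "inj_on \<rho> {..<N}" "j < N"
  shows "Tn N \<rho> (Suc j) = insert (qq N \<rho> (Suc j)) (Tn N \<rho> j)"
  using Tn_Suc[OF assms] by simp

lemma contig_all:
  assumes n: "n \<ge> 3" and inj: "inj_on \<rho> {..<n+k}"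
  shows "1 \<le> j \<Longrightarrow> j \<le> k + 1 \<Longrightarrow> (\<forall>j'. 1 \<le> j' \<and> j' \<le> j \<longrightarrow> card (Wn n k (Tn (n+k) \<rho> j')) = k + 2 - j')
          \<Longrightarrow> \<exists>s<n+k. Tn (n+k) \<rho> j = sh (n+k) s ` {..<j}"
proof (induction j)
  case 0 thus ?case by simp
next
  case (Suc j)
  let ?N = "n + k"
  have N: "0 < ?N" using n by simp
  show ?case
  proof (cases "j = 0")
    case True
    have q: "qq ?N \<rho> 1 < ?N" using qq_props[OF inj, of 1] N by simp
    have l1: "{..<1::nat} = {0}" by auto
    have "Tn ?N \<rho> 1 = sh ?N (qq ?N \<rho> 1) ` {..<1}" unfolding l1 using Tn_one[OF inj N] sh_zero[OF q] by simp
    thus ?thesis using True q by auto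
  next
    case False
    obtain s where s: "s < ?N" "Tn ?N \<rho> j = sh ?N s ` {..<j}" using Suc False by auto
    have jN: "j < ?N" using Suc.prems n by simp
    have x0: "qq ?N \<rho> (Suc j) < ?N" using qq_props[OF inj, of "Suc j"] jN by simp
    have x0n: "qq ?N \<rho> (Suc j) \<notin> sh ?N s ` {..<j}" using Tn_Suc[OF inj jN] s by simp
    have TS: "Tn ?N \<rho> (Suc j) = insert (qq ?N \<rho> (Suc j)) (sh ?N s ` {..<j})" using Tn_Suc[OF inj jN] s by simp
    have "card (Wn n k (Tn ?N \<rho> (Suc j))) = k + 2 - Suc j" using Suc.prems by auto
    hence c: "card (Wn n k (insert (qq ?N \<rho> (Suc j)) (sh ?N s ` {..<j}))) = k + 1 - j" using TS by simp
    show ?thesis using contig_step[OF n _ _ s(1) x0 x0n c] False Suc.prems TS by simp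
  qed
qed

lemma take_sigma:
  "j \<le> K \<Longrightarrow> set (take j (map (\<lambda>a. CA (qq N \<rho> a)) [1..<K+1])) = CA ` qq N \<rho> ` {1..j}"
proof -
  assume j: "j \<le> K"
  have "1 + j \<le> K + 1" using j by simp
  from take_upt[OF this] have "take j [1..<K+1] = [1..<j+1]" by simp
  hence "set (take j (map (\<lambda>a. CA (qq N \<rho> a)) [1..<K+1])) = (\<lambda>a. CA (qq N \<rho> a)) ` {1..<j+1}"
    by (simp add: take_map)
  also have "{1..<j+1} = {1..j}" by auto
  finally show ?thesis by (simp add: image_image)
qed

lemma Tlev_char: "Tlev n k \<sigma> j = {b. \<forall>t\<le>j. (\<sigma> ! t, b) \<in> Inc n k}"
proof (induction j)
  case 0 thus ?case by simp
next
  case (Suc j)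
  thus ?case by (auto simp: le_Suc_eq)
qed

lemma canonical:
  assumes n: "n \<ge> 3" and inj: "inj_on \<rho> {..<n+k}"
    and Z: "{a \<in> {1..n+k}. Wn n k (Tn (n+k) \<rho> a) \<noteq> {}} = {1..k+1}"
    and ct: "\<And>j. 1 \<le> j \<Longrightarrow> j \<le> k + 1 \<Longrightarrow> \<exists>s<n+k. Tn (n+k) \<rho> j = sh (n+k) s ` {..<j}"
  shows "canonical_reversible n k (Rr n k \<rho>)"
proof -
  let ?N = "n + k"
  have N: "0 < ?N" using n by simp
  define \<sigma> where "\<sigma> = map (\<lambda>a. CA (qq ?N \<rho> a)) [1..<k+2]"
  have len: "length \<sigma> = k + 1" unfolding \<sigma>_def by simp
  have nth: "\<sigma> ! t = CA (qq ?N \<rho> (Suc t))" if "t < k + 1" for t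
  proof -
    have "[1..<k+2] ! t = 1 + t" by (rule nth_upt) (use that in simp)
    moreover have "t < length [1..<k+2]" using that by simp
    ultimately show ?thesis unfolding \<sigma>_def by (simp add: nth_map)
  qed
  have qlt: "qq ?N \<rho> a < ?N" if "1 \<le> a" "a \<le> k + 1" for a
    using qq_props[OF inj that(1)] that n by simp
  have hc: "h_contiguous n k \<sigma>"
    unfolding h_contiguous_def
  proof (intro conjI allI impI)
    have "inj_on (\<lambda>a. CA (qq ?N \<rho> a)) {1..k+1}" by (rule inj_CAqq[OF inj]) (use n in auto)
    moreover have "set [1..<k+2] = {1..k+1}" by auto
    ultimately show "distinct \<sigma>" unfolding \<sigma>_def by (simp add: distinct_map)
    show "set \<sigma> \<subseteq> Aset n k"
    proof
      fix z assume "z \<in> set \<sigma>"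
      hence "z \<in> (\<lambda>a. CA (qq ?N \<rho> a)) ` {1..<k+2}" unfolding \<sigma>_def by simp
      then obtain a where "a \<in> {1..k+1}" "z = CA (qq ?N \<rho> a)" by fastforce
      thus "z \<in> Aset n k" using qlt unfolding Aset_def by auto
    qed
    fix j assume j: "1 \<le> j \<and> j \<le> length \<sigma>"
    hence j1: "1 \<le> j" "j \<le> k + 1" using len by auto
    have "set (take j \<sigma>) = CA ` qq ?N \<rho> ` {1..j}" unfolding \<sigma>_def using take_sigma[OF j1(2)] by simp
    also have "qq ?N \<rho> ` {1..j} = Tn ?N \<rho> j" using Tn_img[OF inj] j1 n by simp
    finally have st: "set (take j \<sigma>) = CA ` Tn ?N \<rho> j" .
    obtain s where s: "s < ?N" "Tn ?N \<rho> j = sh ?N s ` {..<j}" using ct j1 by blast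
    have "set (take j \<sigma>) = {CA ((s + t) mod ?N) | t. t < j}" using st s unfolding sh_def by auto
    moreover have "j \<le> ?N" using j1 n by simp
    ultimately show "contiguous n k (set (take j \<sigma>))" unfolding contiguous_def using s(1) by blast
  qed
  have lev: "Tlev n k \<sigma> j = CB ` Wn n k (Tn ?N \<rho> (Suc j))" if j: "j < k + 1" for j
  proof -
    have TS: "Tn ?N \<rho> (Suc j) = qq ?N \<rho> ` {1..Suc j}" using Tn_img[OF inj] j n by simp
    show ?thesis unfolding Tlev_char
    proof
      show "{b. \<forall>t\<le>j. (\<sigma> ! t, b) \<in> Inc n k} \<subseteq> CB ` Wn n k (Tn ?N \<rho> (Suc j))"
      proof
        fix b assume b: "b \<in> {b. \<forall>t\<le>j. (\<sigma> ! t, b) \<in> Inc n k}"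
        hence "(\<sigma> ! 0, b) \<in> Inc n k" by simp
        then obtain l where l: "b = CB l" "l < ?N" unfolding Inc_def by auto
        have "incomp_idx n k m l" if m: "m \<in> Tn ?N \<rho> (Suc j)" for m
        proof -
          obtain a where a: "a \<in> {1..Suc j}" "m = qq ?N \<rho> a" using m TS by blast
          have a1: "a - 1 \<le> j" "a - 1 < k + 1" using a j by auto
          hence "(\<sigma> ! (a - 1), b) \<in> Inc n k" using b by simp
          moreover have "\<sigma> ! (a - 1) = CA m" using nth[OF a1(2)] a by simp
          ultimately show ?thesis using l unfolding Inc_def by auto
        qed
        thus "b \<in> CB ` Wn n k (Tn ?N \<rho> (Suc j))" using l unfolding Wn_def by blast
      qed
      show "CB ` Wn n k (Tn ?N \<rho> (Suc j)) \<subseteq> {b. \<forall>t\<le>j. (\<sigma> ! t, b) \<in> Inc n k}"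
      proof
        fix b assume "b \<in> CB ` Wn n k (Tn ?N \<rho> (Suc j))"
        then obtain l where l: "b = CB l" "l < ?N" "\<forall>m\<in>Tn ?N \<rho> (Suc j). incomp_idx n k m l"
          unfolding Wn_def by blast
        have "(\<sigma> ! t, b) \<in> Inc n k" if t: "t \<le> j" for t
        proof -
          have "qq ?N \<rho> (Suc t) \<in> Tn ?N \<rho> (Suc j)" using TS t by auto
          moreover have "qq ?N \<rho> (Suc t) < ?N" using qlt[of "Suc t"] t j by simp
          moreover have "\<sigma> ! t = CA (qq ?N \<rho> (Suc t))" using nth t j by simp
          ultimately show ?thesis using l unfolding Inc_def by auto
        qed
        thus "b \<in> {b. \<forall>t\<le>j. (\<sigma> ! t, b) \<in> Inc n k}" by blast
      qed
    qed
  qed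
  have "Rr n k \<rho> = Tset n k \<sigma>"
  proof
    show "Rr n k \<rho> \<subseteq> Tset n k \<sigma>"
    proof
      fix z assume "z \<in> Rr n k \<rho>"
      then obtain p l where pl: "z = (CA p, CB l)" "p < ?N" "l \<in> Wn n k {m. m < ?N \<and> \<rho> p \<le> \<rho> m}"
        unfolding Rr_def by blast
      let ?j = "rk ?N \<rho> p"
      have lW: "l \<in> Wn n k (Tn ?N \<rho> (Suc ?j))" using pl(3) Suf_Tn[OF inj pl(2)] by simp
      have "Suc ?j \<in> {a \<in> {1..?N}. Wn n k (Tn ?N \<rho> a) \<noteq> {}}" using lW rk_lt[OF pl(2)] by (auto simp: Suc_le_eq)
      hence "Suc ?j \<in> {1..k+1}" unfolding Z .
      hence jk: "?j < k + 1" by simp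
      have "\<sigma> ! ?j = CA p" using nth[OF jk] qq_rk[OF inj pl(2)] by simp
      moreover have "CB l \<in> Tlev n k \<sigma> ?j" using lev[OF jk] lW by simp
      ultimately show "z \<in> Tset n k \<sigma>" unfolding Tset_def using pl(1) jk len by force
    qed
    show "Tset n k \<sigma> \<subseteq> Rr n k \<rho>"
    proof
      fix z assume "z \<in> Tset n k \<sigma>"
      then obtain j b where jb: "z = (\<sigma> ! j, b)" "j < k + 1" "b \<in> Tlev n k \<sigma> j" unfolding Tset_def len by auto
      obtain l where l: "b = CB l" "l \<in> Wn n k (Tn ?N \<rho> (Suc j))" using jb(3) lev[OF jb(2)] by blast
      let ?p = "qq ?N \<rho> (Suc j)"
      have p: "?p < ?N" "rk ?N \<rho> ?p = j" using qq_props[OF inj, of "Suc j"] jb(2) n by auto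
      have "l \<in> Wn n k {m. m < ?N \<and> \<rho> ?p \<le> \<rho> m}" using l(2) Suf_Tn[OF inj p(1)] p(2) by simp
      thus "z \<in> Rr n k \<rho>" using jb(1) nth[OF jb(2)] l(1) p(1) by (simp add: Rr_mem)
    qed
  qed
  thus ?thesis unfolding canonical_reversible_def using hc len by blast
qed


lemma D_Tn:
  assumes inj: "inj_on \<rho> {..<N}" and x0: "x0 < N"
  shows "{m. m < N \<and> \<rho> x0 < \<rho> m} = Tn N \<rho> (rk N \<rho> x0)"
  unfolding Tn_def using rk_le_iff[OF inj x0] by (auto simp: not_le[symmetric])

lemma notin_Tn_rho:
  assumes inj: "inj_on \<rho> {..<N}" and x0: "x0 < N" and y: "y < N" "y \<notin> Tn N \<rho> (Suc (rk N \<rho> x0))"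
  shows "\<rho> y < \<rho> x0"
proof -
  have "\<not> rk N \<rho> y \<le> rk N \<rho> x0" using y unfolding Tn_def by auto
  thus ?thesis using rk_le_iff[OF inj y(1) x0] by simp
qed

lemma main_case:
  assumes n: "n \<ge> 3" and mr: "max_reversible n k (Rr n k \<rho>)" and inj: "inj_on \<rho> {..<n+k}"
    and i: "2 \<le> i" "i \<le> k + 1"
    and s: "s < n + k" and Tp: "Tn (n+k) \<rho> (i - 1) = sh (n+k) s ` {..<i-1}"
    and ci: "card (Wn n k (Tn (n+k) \<rho> i)) \<noteq> k + 2 - i"
  shows "i + n \<le> k + 2 \<and> card (Wn n k (Tn (n+k) \<rho> i)) + i + n = k + 4
    \<and> (\<forall>j\<in>{i+1..k+1}. card (Wn n k (Tn (n+k) \<rho> j)) + i + n \<le> k + 3)"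
proof -
  let ?N = "n + k"
  have N: "0 < ?N" using n by simp
  define m where "m = i - 1"
  have m: "1 \<le> m" "m \<le> k" "i = Suc m" using i unfolding m_def by auto
  have mN: "m < ?N" using m n by simp
  define x0 where "x0 = qq ?N \<rho> i"
  have x0: "x0 < ?N" "rk ?N \<rho> x0 = m" using qq_props[OF inj, of i] i n unfolding x0_def m_def by auto
  have Ti: "Tn ?N \<rho> i = insert x0 (Tn ?N \<rho> m)" "x0 \<notin> Tn ?N \<rho> m"
    using Tn_Suc[OF inj mN] m(3) unfolding x0_def by auto
  have Tm: "Tn ?N \<rho> m = sh ?N s ` {..<m}" using Tp unfolding m_def .
  obtain e0 where e0: "e0 < ?N" "sh ?N s e0 = x0" using sh_surj[OF N x0(1)] by blast
  have me: "m \<le> e0"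
  proof (rule ccontr)
    assume "\<not> m \<le> e0"
    hence "x0 \<in> sh ?N s ` {..<m}" using e0 by auto
    thus False using Ti(2) Tm by blast
  qed
  define E where "E = insert e0 {..<m}"
  have Esub: "E \<subseteq> {..<?N}" unfolding E_def using e0(1) mN by auto
  have TiE: "Tn ?N \<rho> i = sh ?N s ` E" using Ti(1) Tm e0(2) unfolding E_def by simp
  have cW: "card (Wn n k (sh ?N s ` F)) = card (W' n k F)" if "F \<subseteq> {..<?N}" for F
    using card_Wn_sh[OF that N] .
  have D: "{m'. m' < ?N \<and> \<rho> x0 < \<rho> m'} = Tn ?N \<rho> m" using D_Tn[OF inj x0(1)] x0(2) by simp
  have e0ne: "e0 \<noteq> m"
  proof
    assume "e0 = m"
    hence "Tn ?N \<rho> i = sh ?N s ` {..<Suc m}" using TiE contig_right unfolding E_def by metis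
    hence "card (Wn n k (Tn ?N \<rho> i)) = card (W' n k {..<Suc m})" using cW[of "{..<Suc m}"] m n by simp
    also have "\<dots> = k + 2 - i" using card_W'_int[of "Suc m" k n] m n by simp
    finally show False using ci by simp
  qed
  have e0ne2: "e0 \<noteq> ?N - 1"
  proof
    assume "e0 = ?N - 1"
    hence "Tn ?N \<rho> i = sh ?N (sh ?N s (?N - 1)) ` {..<Suc m}" using TiE contig_left[OF N] unfolding E_def by simp
    hence "card (Wn n k (Tn ?N \<rho> i)) = card (W' n k {..<Suc m})"
      using card_Wn_sh[of "{..<Suc m}" n k "sh ?N s (?N - 1)"] m n by simp
    also have "\<dots> = k + 2 - i" using card_W'_int[of "Suc m" k n] m n by simp
    finally show False using ci by simp
  qed
  have e1: "m + 1 \<le> e0" "e0 \<le> ?N - 2" using me e0(1) e0ne e0ne2 by auto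
  define S where "S = {f. m - 1 \<le> f \<and> f \<le> k \<and> (e0 \<le> f \<or> f + n \<le> e0)}"
  have WE: "W' n k E = S" unfolding E_def S_def by (rule W'_int_pt) (use m me e0 n in auto)
  have cTi: "card (Wn n k (Tn ?N \<rho> i)) = card S" using TiE cW[OF Esub] WE by simp
  have WTi: "Wn n k (Tn ?N \<rho> i) = sh ?N s ` S" using TiE Wn_sh[OF Esub N] WE by simp
  have finS: "finite S" unfolding S_def by (rule finite_subset[of _ "{..k}"]) auto
  have contra: False if ey: "ey < ?N" "ey \<notin> E" and Py: "\<forall>f\<in>S. Pw n k ey f"
      and cl: "card S < card (W' n k (insert ey {..<m}))" for ey
  proof -
    define y where "y = sh ?N s ey"
    have y: "y < ?N" unfolding y_def using sh_lt[OF N] .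
    have "y \<notin> Tn ?N \<rho> i"
    proof
      assume "y \<in> Tn ?N \<rho> i"
      hence "sh ?N s ey \<in> sh ?N s ` E" using TiE unfolding y_def by simp
      moreover have "ey \<in> {..<?N}" using ey(1) by simp
      ultimately have "ey \<in> E" using inj_on_image_mem_iff[OF sh_inj _ Esub] by blast
      thus False using ey(2) by simp
    qed
    hence yx: "\<rho> y < \<rho> x0" using notin_Tn_rho[OF inj x0(1) y] x0(2) m(3) by simp
    have ins: "insert x0 {m'. m' < ?N \<and> \<rho> x0 < \<rho> m'} = Tn ?N \<rho> i" using D Ti(1) by simp
    have incl: "\<forall>l \<in> Wn n k (insert x0 {m'. m' < ?N \<and> \<rho> x0 < \<rho> m'}). incomp_idx n k y l"
    proof
      fix l assume "l \<in> Wn n k (insert x0 {m'. m' < ?N \<and> \<rho> x0 < \<rho> m'})"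
      hence "l \<in> sh ?N s ` S" using ins WTi by simp
      then obtain f where f: "f \<in> S" "l = sh ?N s f" by blast
      have "f < ?N" using f(1) n unfolding S_def by auto
      thus "incomp_idx n k y l" using inc_sh[OF ey(1)] Py f unfolding y_def by simp
    qed
    have Ey: "insert ey {..<m} \<subseteq> {..<?N}" using ey(1) mN by auto
    have "insert y {m'. m' < ?N \<and> \<rho> x0 < \<rho> m'} = sh ?N s ` insert ey {..<m}" using D Tm unfolding y_def by simp
    hence c2: "card (Wn n k (insert y {m'. m' < ?N \<and> \<rho> x0 < \<rho> m'})) = card (W' n k (insert ey {..<m}))"
      using cW[OF Ey] by simp
    have "card (Wn n k (insert x0 {m'. m' < ?N \<and> \<rho> x0 < \<rho> m'})) = card S" using ins cTi by simp
    hence "card (Wn n k (insert x0 {m'. m' < ?N \<and> \<rho> x0 < \<rho> m'}))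
                  < card (Wn n k (insert y {m'. m' < ?N \<and> \<rho> x0 < \<rho> m'}))" using c2 cl by simp
    thus False using move[OF mr inj x0(1) y yx incl] by blast
  qed
  have caseA: "\<not> e0 \<le> m + n - 2"
  proof
    assume A: "e0 \<le> m + n - 2"
    have Sge: "e0 \<le> f" if "f \<in> S" for f using that A unfolding S_def by auto
    show False
    proof (rule contra[of m])
      show "m < ?N" using mN .
      show "m \<notin> E" using e0ne unfolding E_def by simp
      show "\<forall>f\<in>S. Pw n k m f"
      proof
        fix f assume f: "f \<in> S"
        hence "m \<le> f" "f \<le> m + k" using Sge[OF f] e1 unfolding S_def by auto
        thus "Pw n k m f" unfolding Pw_def by simp
      qed
      have "S \<subseteq> {e0..k}"
      proof
        fix f assume f: "f \<in> S"
        have "e0 \<le> f" by (rule Sge[OF f])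
        moreover have "f \<le> k" using f unfolding S_def by simp
        ultimately show "f \<in> {e0..k}" by simp
      qed
      hence "card S \<le> card {e0..k}" by (rule card_mono[rotated]) simp
      hence cS: "card S < k + 1 - m" using e1 m by simp
      have "card (W' n k (insert m {..<m})) = card (W' n k {..<Suc m})" by (simp add: lessThan_Suc)
      also have "\<dots> = k + 1 - m" using card_W'_int[of "Suc m" k n] m n by simp
      finally show "card S < card (W' n k (insert m {..<m}))" using cS by simp
    qed
  qed
  have caseB: "\<not> k + 1 \<le> e0"
  proof
    assume B: "k + 1 \<le> e0"
    have Sle: "f + n \<le> e0" if "f \<in> S" for f using that B unfolding S_def by auto
    show False
    proof (rule contra[of "?N - 1"])
      show "?N - 1 < ?N" using N by simp
      show "?N - 1 \<notin> E" using e0ne2 mN unfolding E_def by auto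
      show "\<forall>f\<in>S. Pw n k (?N - 1) f"
      proof
        fix f assume f: "f \<in> S"
        hence "f + n \<le> ?N - 1" "f < ?N - 1" using Sle[OF f] e1 n by auto
        thus "Pw n k (?N - 1) f" unfolding Pw_def by simp
      qed
      have "S \<subseteq> {m-1..e0-n}"
      proof
        fix f assume f: "f \<in> S"
        have "f + n \<le> e0" by (rule Sle[OF f])
        moreover have "m - 1 \<le> f" using f unfolding S_def by simp
        ultimately show "f \<in> {m-1..e0-n}" by simp
      qed
      hence "card S \<le> card {m-1..e0-n}" by (rule card_mono[rotated]) simp
      moreover have "card {m-1..e0-n} = e0 - n + 1 - (m - 1)" by simp
      ultimately have cSle: "card S \<le> e0 - n + 1 - (m - 1)" by simp
      have cS: "card S < k + 1 - m"
      proof (cases "n \<le> e0")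
        case True
        thus ?thesis using cSle e1 m n by arith
      next
        case False
        hence "S = {}" using Sle by fastforce
        thus ?thesis using m by simp
      qed
      have "W' n k (insert (?N - 1) {..<m}) = {f. m - 1 \<le> f \<and> f \<le> k \<and> (?N - 1 \<le> f \<or> f + n \<le> ?N - 1)}"
        by (rule W'_int_pt) (use m n in auto)
      also have "\<dots> = {m-1..k-1}" using n m by auto
      finally have "card (W' n k (insert (?N - 1) {..<m})) = k + 1 - m" using m by simp
      thus "card S < card (W' n k (insert (?N - 1) {..<m}))" using cS by simp
    qed
  qed
  have e2: "m + n - 1 \<le> e0" "e0 \<le> k" using caseA caseB by auto
  have Seq: "S = {e0..k} \<union> {m-1..e0-n}" unfolding S_def using e2 n m by auto
  have cS: "card S = (k + 1 - e0) + (e0 - n + 1 - (m - 1))"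
  proof -
    have "{e0..k} \<inter> {m-1..e0-n} = {}" using e2 n by auto
    hence "card S = card {e0..k} + card {m-1..e0-n}" unfolding Seq by (simp add: card_Un_disjoint)
    thus ?thesis by simp
  qed
  have r1: "i + n \<le> k + 2" using e2 m by simp
  have r2: "card (Wn n k (Tn ?N \<rho> i)) + i + n = k + 4" using cTi cS e2 m n by simp
  have r3: "card (Wn n k (Tn ?N \<rho> j)) + i + n \<le> k + 3" if j: "j \<in> {i+1..k+1}" for j
  proof -
    have i1: "i < ?N" "i + 1 \<le> k + 1" using j n by auto
    define x1 where "x1 = qq ?N \<rho> (Suc i)"
    have Ti1: "Tn ?N \<rho> (Suc i) = insert x1 (Tn ?N \<rho> i)" "x1 \<notin> Tn ?N \<rho> i"
      using Tn_Suc[OF inj i1(1)] unfolding x1_def by auto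
    have x1: "x1 < ?N" using qq_props[OF inj, of "Suc i"] i1 unfolding x1_def by simp
    obtain e1 where ee1: "e1 < ?N" "sh ?N s e1 = x1" using sh_surj[OF N x1] by blast
    have e1E: "e1 \<notin> E"
    proof
      assume "e1 \<in> E"
      hence "x1 \<in> sh ?N s ` E" using ee1 by blast
      thus False using Ti1(2) TiE by simp
    qed
    hence e1m: "m \<le> e1" "e1 \<noteq> e0" unfolding E_def by auto
    have E1sub: "insert e1 E \<subseteq> {..<?N}" using Esub ee1 by auto
    have "Tn ?N \<rho> (Suc i) = sh ?N s ` insert e1 E" using Ti1(1) TiE ee1(2) by simp
    hence c1: "card (Wn n k (Tn ?N \<rho> (Suc i))) = card (S \<inter> {f. Pw n k e1 f})"
      using cW[OF E1sub] W'_insert[of n k e1 E] WE by simp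
    obtain f where f: "f \<in> S" "\<not> Pw n k e1 f"
    proof (cases "e1 < e0")
      case True
      let ?f = "min (e1 - 1) (e0 - n)"
      show ?thesis
      proof (rule that[of ?f])
        show "?f \<in> S" unfolding S_def using True e1m e2 n m by auto
        show "\<not> Pw n k e1 ?f" unfolding Pw_def using True e1m e2 n m by auto
      qed
    next
      case False
      hence F: "e0 < e1" using e1m by simp
      let ?f = "max e0 (e1 + 1 - n)"
      show ?thesis
      proof (rule that[of ?f])
        show "?f \<in> S" unfolding S_def using F ee1 e2 n m by auto
        show "\<not> Pw n k e1 ?f" unfolding Pw_def using F ee1 e2 n m by auto
      qed
    qed
    have "S \<inter> {f. Pw n k e1 f} \<subset> S" using f by blast
    hence "card (S \<inter> {f. Pw n k e1 f}) < card S" by (rule psubset_card_mono[OF finS])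
    hence lt: "card (Wn n k (Tn ?N \<rho> (Suc i))) < card S" using c1 by simp
    have "Tn ?N \<rho> (Suc i) \<subseteq> Tn ?N \<rho> j" by (rule Tn_mono) (use j in simp)
    hence "Wn n k (Tn ?N \<rho> j) \<subseteq> Wn n k (Tn ?N \<rho> (Suc i))" by (rule Wn_anti)
    hence "card (Wn n k (Tn ?N \<rho> j)) \<le> card (Wn n k (Tn ?N \<rho> (Suc i)))" by (rule card_mono[OF Wn_fin])
    thus ?thesis using lt r2 cTi by simp
  qed
  show ?thesis using r1 r2 r3 by blast
qed


theorem lemma3p2:
  fixes n k i :: nat and R :: "(celem \<times> celem) set" and x :: "nat \<Rightarrow> celem"
  assumes "n \<ge> 3"
    and "max_reversible n k R"
    and "\<not> canonical_reversible n k R"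
    and "consistent_labeling k R x"
    and "i \<ge> 1" and "int (card (Bof (x i) R)) \<noteq> int k + 2 - int i"
    and "\<forall>j. 1 \<le> j \<and> j < i \<longrightarrow> int (card (Bof (x j) R)) = int k + 2 - int j"
  shows "2 \<le> i \<and> int i \<le> int k - int n + 2
    \<and> int (card (Bof (x i) R)) = int k + 4 - int i - int n
    \<and> (\<forall>j \<in> {i+1..k+1}. int (card (Bof (x j) R)) \<le> int k + 3 - int i - int n)"
proof -
  note n = assms(1)
  obtain \<rho> where inj: "inj_on \<rho> {..<n+k}" and R: "R = Rr n k \<rho>" using Rchar[OF assms(2)] by blast
  let ?N = "n + k"
  have N: "0 < ?N" using n by simp
  have mr: "max_reversible n k (Rr n k \<rho>)" using assms(2) R by simp
  have cl: "consistent_labeling k (Rr n k \<rho>) x" using assms(4) R by simp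
  have n1: "n \<ge> 1" using n by simp
  have ceq: "card (Bof (x a) R) = card (Wn n k (Tn ?N \<rho> a))" if "1 \<le> a" "a \<le> k + 1" for a
    using labeling_cards(1)[OF inj cl n1 that] R by simp
  have Z: "{a \<in> {1..n+k}. Wn n k (Tn (n+k) \<rho> a) \<noteq> {}} = {1..k+1}"
    using labeling_cards(2)[OF inj cl n1] .
  have hypC: "card (Wn n k (Tn ?N \<rho> j)) = k + 2 - j" if "1 \<le> j" "j < i" "j \<le> k + 1" for j
  proof -
    have "int (card (Bof (x j) R)) = int k + 2 - int j" using assms(7) that by blast
    hence "int (card (Wn n k (Tn ?N \<rho> j))) = int k + 2 - int j" using ceq[OF that(1,3)] by simp
    thus ?thesis using that(3) by linarith
  qed
  have ik: "i \<le> k + 1"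
  proof (rule ccontr)
    assume "\<not> i \<le> k + 1"
    hence all: "card (Wn n k (Tn ?N \<rho> j)) = k + 2 - j" if "1 \<le> j" "j \<le> k + 1" for j
      using hypC that by simp
    have "\<exists>s<n+k. Tn (n+k) \<rho> j = sh (n+k) s ` {..<j}" if "1 \<le> j" "j \<le> k + 1" for j
      by (rule contig_all[OF n inj that]) (use all that in auto)
    hence "canonical_reversible n k (Rr n k \<rho>)" using canonical[OF n inj Z] by blast
    thus False using assms(3) R by simp
  qed
  have ci: "card (Wn n k (Tn ?N \<rho> i)) \<noteq> k + 2 - i"
  proof
    assume "card (Wn n k (Tn ?N \<rho> i)) = k + 2 - i"
    hence "int (card (Bof (x i) R)) = int k + 2 - int i" using ceq[OF assms(5) ik] ik by simp
    thus False using assms(6) by simp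
  qed
  have i2: "2 \<le> i"
  proof (rule ccontr)
    assume "\<not> 2 \<le> i"
    hence i1: "i = 1" using assms(5) by simp
    have q: "qq ?N \<rho> 1 < ?N" using qq_props[OF inj, of 1] N by simp
    have l1: "{..<1::nat} = {0}" by auto
    have T1: "Tn ?N \<rho> 1 = sh ?N (qq ?N \<rho> 1) ` {..<1}" unfolding l1 using Tn_one[OF inj N] sh_zero[OF q] by simp
    have E1: "{..<1::nat} \<subseteq> {..<?N}" using N by auto
    have "card (Wn n k (Tn ?N \<rho> 1)) = card (W' n k {..<1})" unfolding T1 by (rule card_Wn_sh[OF E1 N])
    also have "\<dots> = k + 1" using card_W'_int[of 1 k n] n by simp
    finally show False using ci i1 by simp
  qed
  obtain s where s: "s < ?N" "Tn ?N \<rho> (i - 1) = sh ?N s ` {..<i-1}"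
  proof -
    have "\<exists>s<n+k. Tn (n+k) \<rho> (i - 1) = sh (n+k) s ` {..<i - 1}"
      by (rule contig_all[OF n inj]) (use i2 ik hypC in auto)
    thus ?thesis using that by blast
  qed
  have M: "i + n \<le> k + 2 \<and> card (Wn n k (Tn ?N \<rho> i)) + i + n = k + 4
    \<and> (\<forall>j\<in>{i+1..k+1}. card (Wn n k (Tn ?N \<rho> j)) + i + n \<le> k + 3)"
    by (rule main_case[OF n mr inj i2 ik s ci])
  have r2: "int (card (Bof (x i) R)) = int k + 4 - int i - int n"
    using M ceq[OF assms(5) ik] by simp
  have r3: "\<forall>j \<in> {i+1..k+1}. int (card (Bof (x j) R)) \<le> int k + 3 - int i - int n"
  proof
    fix j assume j: "j \<in> {i+1..k+1}"
    hence "card (Wn n k (Tn ?N \<rho> j)) + i + n \<le> k + 3" using M by blast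
    moreover have "card (Bof (x j) R) = card (Wn n k (Tn ?N \<rho> j))" using ceq j assms(5) by simp
    ultimately show "int (card (Bof (x j) R)) \<le> int k + 3 - int i - int n" by simp
  qed
  show ?thesis using i2 M r2 r3 by simp
qed


end
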